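(* Let $H,A$ be as in the context and let $c\in H$ be a non-trivial central element. For $a\in A$ put $x_a=\langle a,c_{(1)}\rangle c_{(2)}-\langle a,c\rangle 1\in\ker\epsilon\subset H$. Then both $\widetilde{L_c}={\rm span}\{x_a\mid a\in A\}$ and $L_c={\rm span}\{x_a\mid a\in\ker\epsilon\subset A\}$ are stable under the quantum double action $h\triangleright x=h_{(1)}xSh_{(2)}$, $a\triangleright x=\langle a,x_{(1)}\rangle x_{(2)}-\langle a,x\rangle1$. Moreover, for $a,b\in A$ (with $a\in\ker\epsilon$ for elements of $L_c$), writing $\partial_x(b)=\langle x,b_{(1)}\rangle b_{(2)}$, $\Psi^{-1}(b\otimes x)=b_{(1)}\triangleright x\otimes b_{(2)}$, $[x,y]=x_{(1)}ySx_{(2)}$ and $\Psi(x\otimes y)=[x_{(1)},y]\otimes x_{(2)}-[x,y]\otimes1$: \[\partial_{x_a}(b)=\langle ab_{(1)},c\rangle b_{(2)}-\langle a,c\rangle b,\qquad \Psi^{-1}(b\otimes x_a)=x_{ab_{(1)}}\otimes b_{(2)},\] \[[x_a,x_b]=x_{b_{(2)}}\langle a(Sb_{(1)})b_{(3)},c\rangle-x_b\langle a,c\rangle,\qquad \Psi(x_a\otimes x_b)=x_{b_{(2)}}\otimes x_{a(Sb_{(1)})b_{(3)}}.\]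
   Context: $H,A$ are Hopf algebras over $\mathbb{C}$ with invertible antipodes, non-degenerately paired by a Hopf pairing $\langle\ ,\ \rangle$ ($\langle hg,a\rangle=\langle h,a_{(1)}\rangle\langle g,a_{(2)}\rangle$, $\langle h,ab\rangle=\langle h_{(1)},a\rangle\langle h_{(2)},b\rangle$, compatible with units, counits, antipodes); Sweedler notation. $[h,y]:=h_{(1)}ySh_{(2)}$ for $h\in H$. *)

theory Defs
  imports Complex_Main
begin

text \<open>Complex vector spaces are modelled as types of class ring_1 together with an
explicit scalar multiplication s (required to satisfy the vector_space locale).
An element of a tensor product V (x) W is represented by a finite list of pairs
(a formal sum of elementary tensors).  Two such lists denote the same tensor iff
they agree under all pairs of linear functionals (standard characterisation of
equality in V (x) W over a field).\<close>

definition teq :: "(complex \<Rightarrow> 'v::ab_group_add \<Rightarrow> 'v) \<Rightarrow> (complex \<Rightarrow> 'w::ab_group_add \<Rightarrow> 'w)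
   \<Rightarrow> ('v \<times> 'w) list \<Rightarrow> ('v \<times> 'w) list \<Rightarrow> bool" where
  "teq sV sW xs ys \<longleftrightarrow>
     (\<forall>f g. Vector_Spaces.linear sV (*) f \<longrightarrow> Vector_Spaces.linear sW (*) g \<longrightarrow>
        sum_list (map (\<lambda>(x, y). f x * g y) xs) = sum_list (map (\<lambda>(x, y). f x * g y) ys))"

definition teq3 :: "(complex \<Rightarrow> 'u::ab_group_add \<Rightarrow> 'u) \<Rightarrow> (complex \<Rightarrow> 'v::ab_group_add \<Rightarrow> 'v)
   \<Rightarrow> (complex \<Rightarrow> 'w::ab_group_add \<Rightarrow> 'w)
   \<Rightarrow> ('u \<times> 'v \<times> 'w) list \<Rightarrow> ('u \<times> 'v \<times> 'w) list \<Rightarrow> bool" where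
  "teq3 sU sV sW xs ys \<longleftrightarrow>
     (\<forall>f g k. Vector_Spaces.linear sU (*) f \<longrightarrow> Vector_Spaces.linear sV (*) g \<longrightarrow>
        Vector_Spaces.linear sW (*) k \<longrightarrow>
        sum_list (map (\<lambda>(x, y, z). f x * g y * k z) xs) =
        sum_list (map (\<lambda>(x, y, z). f x * g y * k z) ys))"

definition cop2 :: "('h \<Rightarrow> ('h \<times> 'h) list) \<Rightarrow> 'h \<Rightarrow> ('h \<times> 'h \<times> 'h) list" where
  "cop2 \<Delta> x = concat (map (\<lambda>(u, v). map (\<lambda>(v1, v2). (u, v1, v2)) (\<Delta> v)) (\<Delta> x))"

definition cop2' :: "('h \<Rightarrow> ('h \<times> 'h) list) \<Rightarrow> 'h \<Rightarrow> ('h \<times> 'h \<times> 'h) list" where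
  "cop2' \<Delta> x = concat (map (\<lambda>(u, v). map (\<lambda>(u1, u2). (u1, u2, v)) (\<Delta> u)) (\<Delta> x))"

definition hopf_algebra :: "(complex \<Rightarrow> 'h::ring_1 \<Rightarrow> 'h) \<Rightarrow> ('h \<Rightarrow> ('h \<times> 'h) list)
   \<Rightarrow> ('h \<Rightarrow> complex) \<Rightarrow> ('h \<Rightarrow> 'h) \<Rightarrow> bool" where
  "hopf_algebra s \<Delta> \<epsilon> S \<longleftrightarrow>
     vector_space s \<and>
     (\<forall>c x y. s c (x * y) = s c x * y \<and> s c (x * y) = x * s c y) \<and>
     (\<forall>x y. teq s s (\<Delta> (x + y)) (\<Delta> x @ \<Delta> y)) \<and>
     (\<forall>c x. teq s s (\<Delta> (s c x)) (map (\<lambda>(u, v). (s c u, v)) (\<Delta> x))) \<and>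
     (\<forall>x. teq3 s s s (cop2' \<Delta> x) (cop2 \<Delta> x)) \<and>
     Vector_Spaces.linear s (*) \<epsilon> \<and>
     (\<forall>x. sum_list (map (\<lambda>(u, v). s (\<epsilon> u) v) (\<Delta> x)) = x) \<and>
     (\<forall>x. sum_list (map (\<lambda>(u, v). s (\<epsilon> v) u) (\<Delta> x)) = x) \<and>
     (\<forall>x y. teq s s (\<Delta> (x * y))
        (concat (map (\<lambda>(u, v). map (\<lambda>(u', v'). (u * u', v * v')) (\<Delta> y)) (\<Delta> x)))) \<and>
     teq s s (\<Delta> 1) [(1, 1)] \<and>
     (\<forall>x y. \<epsilon> (x * y) = \<epsilon> x * \<epsilon> y) \<and> \<epsilon> 1 = 1 \<and>
     Vector_Spaces.linear s s S \<and>
     (\<forall>x. sum_list (map (\<lambda>(u, v). S u * v) (\<Delta> x)) = s (\<epsilon> x) 1) \<and>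
     (\<forall>x. sum_list (map (\<lambda>(u, v). u * S v) (\<Delta> x)) = s (\<epsilon> x) 1) \<and>
     bij S"

definition hopf_pairing :: "(complex \<Rightarrow> 'h::ring_1 \<Rightarrow> 'h) \<Rightarrow> ('h \<Rightarrow> ('h \<times> 'h) list)
   \<Rightarrow> ('h \<Rightarrow> complex) \<Rightarrow> ('h \<Rightarrow> 'h)
   \<Rightarrow> (complex \<Rightarrow> 'a::ring_1 \<Rightarrow> 'a) \<Rightarrow> ('a \<Rightarrow> ('a \<times> 'a) list)
   \<Rightarrow> ('a \<Rightarrow> complex) \<Rightarrow> ('a \<Rightarrow> 'a) \<Rightarrow> ('h \<Rightarrow> 'a \<Rightarrow> complex) \<Rightarrow> bool" where
  "hopf_pairing sH \<Delta>H \<epsilon>H SH sA \<Delta>A \<epsilon>A SA pr \<longleftrightarrow>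
     hopf_algebra sH \<Delta>H \<epsilon>H SH \<and> hopf_algebra sA \<Delta>A \<epsilon>A SA \<and>
     (\<forall>a. Vector_Spaces.linear sH (*) (\<lambda>h. pr h a)) \<and>
     (\<forall>h. Vector_Spaces.linear sA (*) (\<lambda>a. pr h a)) \<and>
     (\<forall>h g a. pr (h * g) a = sum_list (map (\<lambda>(a1, a2). pr h a1 * pr g a2) (\<Delta>A a))) \<and>
     (\<forall>h a b. pr h (a * b) = sum_list (map (\<lambda>(h1, h2). pr h1 a * pr h2 b) (\<Delta>H h))) \<and>
     (\<forall>a. pr 1 a = \<epsilon>A a) \<and> (\<forall>h. pr h 1 = \<epsilon>H h) \<and>
     (\<forall>h a. pr (SH h) a = pr h (SA a)) \<and>
     (\<forall>h. (\<forall>a. pr h a = 0) \<longrightarrow> h = 0) \<and>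
     (\<forall>a. (\<forall>h. pr h a = 0) \<longrightarrow> a = 0)"

definition xel :: "(complex \<Rightarrow> 'h::ring_1 \<Rightarrow> 'h) \<Rightarrow> ('h \<Rightarrow> ('h \<times> 'h) list)
   \<Rightarrow> ('h \<Rightarrow> 'a \<Rightarrow> complex) \<Rightarrow> 'h \<Rightarrow> 'a \<Rightarrow> 'h" where
  "xel sH \<Delta>H pr c a = sum_list (map (\<lambda>(c1, c2). sH (pr c1 a) c2) (\<Delta>H c)) - sH (pr c a) 1"

text \<open>Quantum double action: h |> x = h1 x S h2 (this is also [h,x]),
  a |> x = <a,x1> x2 - <a,x> 1.\<close>
definition actH :: "('h::ring_1 \<Rightarrow> ('h \<times> 'h) list) \<Rightarrow> ('h \<Rightarrow> 'h) \<Rightarrow> 'h \<Rightarrow> 'h \<Rightarrow> 'h" where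
  "actH \<Delta>H SH h x = sum_list (map (\<lambda>(h1, h2). h1 * x * SH h2) (\<Delta>H h))"

definition actA :: "(complex \<Rightarrow> 'h::ring_1 \<Rightarrow> 'h) \<Rightarrow> ('h \<Rightarrow> ('h \<times> 'h) list)
   \<Rightarrow> ('h \<Rightarrow> 'a \<Rightarrow> complex) \<Rightarrow> 'a \<Rightarrow> 'h \<Rightarrow> 'h" where
  "actA sH \<Delta>H pr a x = sum_list (map (\<lambda>(x1, x2). sH (pr x1 a) x2) (\<Delta>H x)) - sH (pr x a) 1"

definition qd_stable :: "(complex \<Rightarrow> 'h::ring_1 \<Rightarrow> 'h) \<Rightarrow> ('h \<Rightarrow> ('h \<times> 'h) list)
   \<Rightarrow> ('h \<Rightarrow> 'h) \<Rightarrow> ('h \<Rightarrow> 'a \<Rightarrow> complex) \<Rightarrow> 'h set \<Rightarrow> bool" where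
  "qd_stable sH \<Delta>H SH pr L \<longleftrightarrow>
     (\<forall>h x. x \<in> L \<longrightarrow> actH \<Delta>H SH h x \<in> L) \<and>
     (\<forall>a x. x \<in> L \<longrightarrow> actA sH \<Delta>H pr a x \<in> L)"

definition dpart :: "(complex \<Rightarrow> 'a::ring_1 \<Rightarrow> 'a) \<Rightarrow> ('a \<Rightarrow> ('a \<times> 'a) list)
   \<Rightarrow> ('h \<Rightarrow> 'a \<Rightarrow> complex) \<Rightarrow> 'h \<Rightarrow> 'a \<Rightarrow> 'a" where
  "dpart sA \<Delta>A pr x b = sum_list (map (\<lambda>(b1, b2). sA (pr x b1) b2) (\<Delta>A b))"

definition psi_inv :: "(complex \<Rightarrow> 'h::ring_1 \<Rightarrow> 'h) \<Rightarrow> ('h \<Rightarrow> ('h \<times> 'h) list)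
   \<Rightarrow> ('a \<Rightarrow> ('a \<times> 'a) list) \<Rightarrow> ('h \<Rightarrow> 'a \<Rightarrow> complex) \<Rightarrow> 'a \<Rightarrow> 'h \<Rightarrow> ('h \<times> 'a) list" where
  "psi_inv sH \<Delta>H \<Delta>A pr b x = map (\<lambda>(b1, b2). (actA sH \<Delta>H pr b1 x, b2)) (\<Delta>A b)"

definition psi :: "('h::ring_1 \<Rightarrow> ('h \<times> 'h) list) \<Rightarrow> ('h \<Rightarrow> 'h) \<Rightarrow> 'h \<Rightarrow> 'h \<Rightarrow> ('h \<times> 'h) list" where
  "psi \<Delta>H SH x y = map (\<lambda>(x1, x2). (actH \<Delta>H SH x1 y, x2)) (\<Delta>H x) @ [(- actH \<Delta>H SH x y, 1)]"

end

theory Submission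
  imports Defs
begin


definition S2 :: "('x \<times> 'y) list \<Rightarrow> ('x \<Rightarrow> 'y \<Rightarrow> 'b::comm_monoid_add) \<Rightarrow> 'b" where
  "S2 L F = sum_list (map (\<lambda>(u,v). F u v) L)"

lemma S2_Nil[simp]: "S2 [] F = 0" and S2_Cons[simp]: "S2 ((u,v)#L) F = F u v + S2 L F"
  by (simp_all add: S2_def)

lemma S2_add: "S2 L (\<lambda>u v. F u v + G u v) = S2 L F + S2 L G"
  by (induction L) (auto simp: add_ac)

lemma S2_diff: "S2 L (\<lambda>u v. (F u v::'b::ab_group_add) - G u v) = S2 L F - S2 L G"
  by (induction L) (auto simp: algebra_simps)

lemma S2_hom: assumes "\<And>x y. f (x+y) = f x + f y" "f 0 = 0"
  shows "f (S2 L F) = S2 L (\<lambda>u v. f (F u v))"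
  by (induction L) (auto simp: assms)


lemma S2_zero[simp]: "S2 L (\<lambda>u v. 0) = 0"
  by (induction L) auto

lemma S2_swap: "S2 L (\<lambda>u v. S2 M (G u v)) = S2 M (\<lambda>x y. S2 L (\<lambda>u v. G u v x y))"
  by (induction L) (auto simp: S2_add)

lemma S2_cong: "(\<And>u v. (u,v) \<in> set L \<Longrightarrow> F u v = G u v) \<Longrightarrow> S2 L F = S2 L G"
  by (induction L) auto

lemma S2_mult_left: "(t::'b::semiring_0) * S2 L F = S2 L (\<lambda>u v. t * F u v)"
  by (induction L) (auto simp: algebra_simps)

lemma S2_mult_right: "S2 L F * (t::'b::semiring_0) = S2 L (\<lambda>u v. F u v * t)"
  by (induction L) (auto simp: algebra_simps)


definition S3 :: "('x \<times> 'y \<times> 'z) list \<Rightarrow> ('x \<Rightarrow> 'y \<Rightarrow> 'z \<Rightarrow> 'b::comm_monoid_add) \<Rightarrow> 'b" where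
  "S3 L F = sum_list (map (\<lambda>(u,v,w). F u v w) L)"

lemma sum_list_concat_map: "sum_list (map g (concat (map h L))) = sum_list (map (\<lambda>x. sum_list (map g (h x))) L)"
  by (induction L) auto

lemma S3_map1: "S3 (map (Pair u) M) F = S2 M (F u)"
  by (induction M) (auto simp: S3_def)
lemma S3_map2: "S3 (map (\<lambda>(u1,u2). (u1,u2,v)) M) F = S2 M (\<lambda>u1 u2. F u1 u2 v)"
  by (induction M) (auto simp: S3_def)
lemma S3_append: "S3 (L @ M) F = S3 L F + S3 M F"
  by (simp add: S3_def)

lemma S3_cop2: "S3 (cop2 D x) F = S2 (D x) (\<lambda>u v. S2 (D v) (\<lambda>v1 v2. F u v1 v2))"
proof -
  have "\<And>L. S3 (concat (map (\<lambda>(u, v). map (\<lambda>(v1, v2). (u, v1, v2)) (D v)) L)) F = S2 L (\<lambda>u v. S2 (D v) (\<lambda>v1 v2. F u v1 v2))"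
    subgoal for L by (induction L) (auto simp: S3_append S3_map1, simp add: S3_def)
    done
  then show ?thesis by (simp add: cop2_def)
qed

lemma S3_cop2': "S3 (cop2' D x) F = S2 (D x) (\<lambda>u v. S2 (D u) (\<lambda>u1 u2. F u1 u2 v))"
proof -
  have "\<And>L. S3 (concat (map (\<lambda>(u, v). map (\<lambda>(u1, u2). (u1, u2, v)) (D u)) L)) F = S2 L (\<lambda>u v. S2 (D u) (\<lambda>u1 u2. F u1 u2 v))"
    subgoal for L by (induction L) (auto simp: S3_append S3_map2, simp add: S3_def)
    done
  then show ?thesis by (simp add: cop2'_def)
qed

lemma S3_Nil[simp]: "S3 [] F = 0" and S3_Cons[simp]: "S3 ((u,v,w)#L) F = F u v w + S3 L F"
  by (simp_all add: S3_def)
lemma S3_hom: assumes "\<And>x y. f (x+y) = f x + f y" "f 0 = 0"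
  shows "f (S3 L F) = S3 L (\<lambda>u v w. f (F u v w))"
  by (induction L) (auto simp: assms)
lemma S3_cong: "(\<And>u v w. (u,v,w) \<in> set L \<Longrightarrow> F u v w = G u v w) \<Longrightarrow> S3 L F = S3 L G"
  by (induction L) auto
lemma S3_zero[simp]: "S3 L (\<lambda>u v w. 0) = 0"
  by (induction L) auto
lemma S3_add: "S3 L (\<lambda>u v w. F u v w + G u v w) = S3 L F + S3 L G"
  by (induction L) (auto simp: add_ac)
lemma S3_diff: "S3 L (\<lambda>u v w. (F u v w::'b::ab_group_add) - G u v w) = S3 L F - S3 L G"
  by (induction L) (auto simp: algebra_simps)
lemma S3_S2_swap: "S3 L (\<lambda>u v w. S2 M (G u v w)) = S2 M (\<lambda>x y. S3 L (\<lambda>u v w. G u v w x y))"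
  by (induction L) (auto simp: S2_add)
lemma S3_mult_left: "(t::'b::semiring_0) * S3 L F = S3 L (\<lambda>u v w. t * F u v w)"
  by (induction L) (auto simp: algebra_simps)
lemma S3_mult_right: "S3 L F * (t::'b::semiring_0) = S3 L (\<lambda>u v w. F u v w * t)"
  by (induction L) (auto simp: algebra_simps)

lemma vs_complex: "vector_space ((*)::complex \<Rightarrow> complex \<Rightarrow> complex)"
  by unfold_locales (auto simp: algebra_simps)




lemma lin_add: "Vector_Spaces.linear s (*) f \<Longrightarrow> f (x + y) = f x + f y"
  by (simp add: Vector_Spaces.linear_iff)
lemma lin_scale: "Vector_Spaces.linear s (*) f \<Longrightarrow> f (s t x) = t * f x"
  by (simp add: Vector_Spaces.linear_iff)
lemma linI: "vector_space s \<Longrightarrow> (\<And>x y. f (x + y) = f x + f y) \<Longrightarrow> (\<And>t x. f (s t x) = t * f x)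
   \<Longrightarrow> Vector_Spaces.linear s ((*)::complex\<Rightarrow>complex\<Rightarrow>complex) f"
  by (simp add: Vector_Spaces.linear_iff vs_complex)

locale HP =
  fixes sH :: "complex \<Rightarrow> 'h::ring_1 \<Rightarrow> 'h" and DH :: "'h \<Rightarrow> ('h \<times> 'h) list"
    and eH :: "'h \<Rightarrow> complex" and SH :: "'h \<Rightarrow> 'h"
    and sA :: "complex \<Rightarrow> 'a::ring_1 \<Rightarrow> 'a" and DA :: "'a \<Rightarrow> ('a \<times> 'a) list"
    and eA :: "'a \<Rightarrow> complex" and SA :: "'a \<Rightarrow> 'a"
    and pr :: "'h \<Rightarrow> 'a \<Rightarrow> complex" and c :: 'h
  assumes hp: "hopf_pairing sH DH eH SH sA DA eA SA pr"
    and central: "\<forall>h. c * h = h * c"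
begin

lemma HA: "hopf_algebra sH DH eH SH" using hp by (simp add: hopf_pairing_def)
lemma AA: "hopf_algebra sA DA eA SA" using hp by (simp add: hopf_pairing_def)

lemma vsH: "vector_space sH" using HA by (simp add: hopf_algebra_def)
lemma vsA: "vector_space sA" using AA by (simp add: hopf_algebra_def)

sublocale vH: vector_space sH by (rule vsH)
sublocale vA: vector_space sA by (rule vsA)

lemma sH_mult1: "sH t (x * y) = sH t x * y" using HA by (simp add: hopf_algebra_def)
lemma sH_mult2: "sH t (x * y) = x * sH t y" using HA unfolding hopf_algebra_def by blast
lemma sA_mult1: "sA t (x * y) = sA t x * y" using AA by (simp add: hopf_algebra_def)
lemma sA_mult2: "sA t (x * y) = x * sA t y" using AA unfolding hopf_algebra_def by blast

lemma linpH: "Vector_Spaces.linear sH (*) (\<lambda>h. pr h a)" using hp by (simp add: hopf_pairing_def)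
lemma linpA: "Vector_Spaces.linear sA (*) (pr h)" using hp by (simp add: hopf_pairing_def)

lemma prL_add[simp]: "pr (h + g) a = pr h a + pr g a" using lin_add[OF linpH] .
lemma prL_scale[simp]: "pr (sH t h) a = t * pr h a" using lin_scale[OF linpH] .
lemma prL_zero[simp]: "pr 0 a = 0" using prL_scale[of 0 0 a] by simp
lemma prL_minus[simp]: "pr (- h) a = - pr h a" using prL_scale[of "-1" h a] by simp
lemma prL_diff[simp]: "pr (h - g) a = pr h a - pr g a" using prL_add[of h "-g" a] by simp
lemma prR_add[simp]: "pr h (a + b) = pr h a + pr h b" using lin_add[OF linpA] .
lemma prR_scale[simp]: "pr h (sA t a) = t * pr h a" using lin_scale[OF linpA] .
lemma prR_zero[simp]: "pr h 0 = 0" using prR_scale[of h 0 0] by simp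
lemma prR_minus[simp]: "pr h (- a) = - pr h a" using prR_scale[of h "-1" a] by simp
lemma prR_diff[simp]: "pr h (a - b) = pr h a - pr h b" using prR_add[of h a "-b"] by simp

lemma prL_S2: "pr (S2 L F) a = S2 L (\<lambda>u v. pr (F u v) a)"
  by (rule S2_hom) simp_all
lemma prR_S2: "pr h (S2 L F) = S2 L (\<lambda>u v. pr h (F u v))"
  by (rule S2_hom) simp_all

lemma P1: "pr (h * g) a = S2 (DA a) (\<lambda>a1 a2. pr h a1 * pr g a2)"
  using hp by (simp add: hopf_pairing_def S2_def)
lemma P2: "pr h (a * b) = S2 (DH h) (\<lambda>h1 h2. pr h1 a * pr h2 b)"
  using hp by (simp add: hopf_pairing_def S2_def)
lemma pr_1L[simp]: "pr 1 a = eA a" using hp by (simp add: hopf_pairing_def)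
lemma pr_1R[simp]: "pr h 1 = eH h" using hp by (simp add: hopf_pairing_def)
lemma pr_S: "pr (SH h) a = pr h (SA a)" using hp by (simp add: hopf_pairing_def)

lemma ndH0: "\<forall>a. pr h a = 0 \<Longrightarrow> h = 0" using hp unfolding hopf_pairing_def by blast
lemma ndA0: "\<forall>h. pr h a = 0 \<Longrightarrow> a = 0" using hp unfolding hopf_pairing_def by blast
lemma ndH: assumes "\<And>a. pr h a = pr g a" shows "h = g"
proof -
  have "\<forall>a. pr (h - g) a = 0" using assms by simp
  then have "h - g = 0" by (rule ndH0)
  then show ?thesis by simp
qed
lemma ndA: assumes "\<And>h. pr h a = pr h b" shows "a = b"
proof -
  have "\<forall>h. pr h (a - b) = 0" using assms by simp
  then have "a - b = 0" by (rule ndA0)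
  then show ?thesis by simp
qed

lemma linEA: "Vector_Spaces.linear sA (*) eA" using AA by (simp add: hopf_algebra_def)
lemma linEH: "Vector_Spaces.linear sH (*) eH" using HA by (simp add: hopf_algebra_def)
lemma eA_add[simp]: "eA (x + y) = eA x + eA y" using lin_add[OF linEA] .
lemma eA_scale[simp]: "eA (sA t x) = t * eA x" using lin_scale[OF linEA] .
lemma eA_zero[simp]: "eA 0 = 0" using eA_scale[of 0 0] by simp
lemma eH_add[simp]: "eH (x + y) = eH x + eH y" using lin_add[OF linEH] .
lemma eH_scale[simp]: "eH (sH t x) = t * eH x" using lin_scale[OF linEH] .
lemma eH_zero[simp]: "eH 0 = 0" using eH_scale[of 0 0] by simp
lemma eA_mult: "eA (x * y) = eA x * eA y" using AA by (simp add: hopf_algebra_def)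
lemma eA_one[simp]: "eA 1 = 1" using AA by (simp add: hopf_algebra_def)
lemma eA_S2: "eA (S2 L F) = S2 L (\<lambda>u v. eA (F u v))" by (rule S2_hom) simp_all

lemma counitA1: "S2 (DA x) (\<lambda>u v. sA (eA u) v) = x" using AA by (simp add: hopf_algebra_def S2_def)
lemma counitA2: "S2 (DA x) (\<lambda>u v. sA (eA v) u) = x" using AA by (simp add: hopf_algebra_def S2_def)
lemma antipA1: "S2 (DA x) (\<lambda>u v. SA u * v) = sA (eA x) 1" using AA by (simp add: hopf_algebra_def S2_def)
lemma antipA2: "S2 (DA x) (\<lambda>u v. u * SA v) = sA (eA x) 1" using AA by (simp add: hopf_algebra_def S2_def)
lemma antipH1: "S2 (DH x) (\<lambda>u v. SH u * v) = sH (eH x) 1" using HA by (simp add: hopf_algebra_def S2_def)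
lemma antipH2: "S2 (DH x) (\<lambda>u v. u * SH v) = sH (eH x) 1" using HA by (simp add: hopf_algebra_def S2_def)

lemma linSA: "Vector_Spaces.linear sA sA SA" using AA by (simp add: hopf_algebra_def)
lemma SA_add[simp]: "SA (x + y) = SA x + SA y" using linSA by (simp add: Vector_Spaces.linear_iff)
lemma SA_scale[simp]: "SA (sA t x) = sA t (SA x)" using linSA by (simp add: Vector_Spaces.linear_iff)
lemma SA_zero[simp]: "SA 0 = 0" using SA_scale[of 0 0] by simp

lemma teq3A: "Vector_Spaces.linear sA (*) f \<Longrightarrow> Vector_Spaces.linear sA (*) g \<Longrightarrow> Vector_Spaces.linear sA (*) k \<Longrightarrow>
  S3 (cop2' DA x) (\<lambda>u v w. f u * g v * k w) = S3 (cop2 DA x) (\<lambda>u v w. f u * g v * k w)"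
  using AA unfolding hopf_algebra_def teq3_def S3_def by blast

lemma multA: "Vector_Spaces.linear sA (*) f \<Longrightarrow> Vector_Spaces.linear sA (*) g \<Longrightarrow>
  S2 (DA (x * y)) (\<lambda>u v. f u * g v) = S2 (DA x) (\<lambda>u v. S2 (DA y) (\<lambda>u' v'. f (u * u') * g (v * v')))"
proof -
  assume lf: "Vector_Spaces.linear sA (*) f" and lg: "Vector_Spaces.linear sA (*) g"
  have "teq sA sA (DA (x * y)) (concat (map (\<lambda>(u, v). map (\<lambda>(u', v'). (u * u', v * v')) (DA y)) (DA x)))"
    using AA by (simp add: hopf_algebra_def)
  then have "S2 (DA (x * y)) (\<lambda>u v. f u * g v) = S2 (concat (map (\<lambda>(u, v). map (\<lambda>(u', v'). (u * u', v * v')) (DA y)) (DA x))) (\<lambda>u v. f u * g v)"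
    using lf lg unfolding teq_def S2_def by blast
  also have "\<dots> = S2 (DA x) (\<lambda>u v. S2 (DA y) (\<lambda>u' v'. f (u * u') * g (v * v')))"
  proof -
    have a: "\<And>M u v. S2 (map (\<lambda>(u', v'). (u * u', v * v')) M) (\<lambda>u v. f u * g v) = S2 M (\<lambda>u' v'. f (u * u') * g (v * v'))"
      subgoal for M u v by (induction M) auto done
    have "\<And>L. S2 (concat (map (\<lambda>(u, v). map (\<lambda>(u', v'). (u * u', v * v')) (DA y)) L)) (\<lambda>u v. f u * g v)
       = S2 L (\<lambda>u v. S2 (DA y) (\<lambda>u' v'. f (u * u') * g (v * v')))"
      subgoal for L by (induction L) (auto simp: a[symmetric], simp add: S2_def) done
    then show ?thesis .
  qed
  finally show ?thesis .
qed

definition phi where "phi a = pr c a"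

lemma pr_mult_central: "pr (c * h) a = pr (h * c) a" using central by simp

end



context HP begin

lemma sA_S2: "sA t (S2 L F) = S2 L (\<lambda>u v. sA t (F u v))"
  by (rule S2_hom) (simp_all add: vA.scale_right_distrib)
lemma sH_S2: "sH t (S2 L F) = S2 L (\<lambda>u v. sH t (F u v))"
  by (rule S2_hom) (simp_all add: vH.scale_right_distrib)
lemma SA_S2: "SA (S2 L F) = S2 L (\<lambda>u v. SA (F u v))"
  by (rule S2_hom) simp_all
lemma linS2: "Vector_Spaces.linear sA (*) g \<Longrightarrow> g (S2 L F) = S2 L (\<lambda>u v. g (F u v))"
  apply (rule S2_hom)
   apply (simp add: lin_add)
  using lin_scale[of sA g 0 0] by simp

lemma P1_cop2: "S3 (cop2 DA x) (\<lambda>u v w. pr h u * pr g v * pr l w) = pr (h * (g * l)) x"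
  by (simp add: S3_cop2 P1 S2_mult_left mult.assoc)
lemma P1_cop2': "S3 (cop2' DA x) (\<lambda>u v w. pr h u * pr g v * pr l w) = pr ((h * g) * l) x"
  by (simp add: S3_cop2' P1 S2_mult_right)

lemma xel_S2: "xel sH DH pr c a = S2 (DH c) (\<lambda>c1 c2. sH (pr c1 a) c2) - sH (pr c a) 1"
  by (simp add: xel_def S2_def)
lemma actA_S2: "actA sH DH pr d x = S2 (DH x) (\<lambda>x1 x2. sH (pr x1 d) x2) - sH (pr x d) 1"
  by (simp add: actA_def S2_def)
lemma actH_S2: "actH DH SH k x = S2 (DH k) (\<lambda>k1 k2. k1 * x * SH k2)"
  by (simp add: actH_def S2_def)

abbreviation X where "X \<equiv> xel sH DH pr c"

lemma PX: "pr (X a) e = phi (a * e) - phi a * eA e"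
  by (simp add: xel_S2 prL_S2 P2 phi_def)

lemma phi_add[simp]: "phi (a + b) = phi a + phi b" by (simp add: phi_def)
lemma phi_scale[simp]: "phi (sA t a) = t * phi a" by (simp add: phi_def)
lemma phi_zero[simp]: "phi 0 = 0" by (simp add: phi_def)
lemma phi_diff[simp]: "phi (a - b) = phi a - phi b" by (simp add: phi_def)
lemma phi_S2: "phi (S2 L F) = S2 L (\<lambda>u v. phi (F u v))" by (simp add: phi_def prR_S2)

lemma X_add: "X (a + b) = X a + X b"
  by (rule ndH) (simp add: PX distrib_right algebra_simps)
lemma X_scale: "X (sA t a) = sH t (X a)"
  by (rule ndH) (simp add: PX sA_mult1[symmetric] algebra_simps)
lemma X_zero: "X 0 = 0"
  by (rule ndH) (simp add: PX)
lemma X_diff: "X (a - b) = X a - X b"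
  by (rule ndH) (simp add: PX algebra_simps)
lemma X_S2: "X (S2 L F) = S2 L (\<lambda>u v. X (F u v))"
  by (rule S2_hom) (simp_all add: X_add X_zero)
lemma X_S3: "X (S3 L F) = S3 L (\<lambda>u v w. X (F u v w))"
  by (rule S3_hom) (simp_all add: X_add X_zero)

lemma pr_actA: "pr (actA sH DH pr d x) e = pr x (d * e) - pr x d * eA e"
  by (simp add: actA_S2 prL_S2 P2)

lemma actA_X: "actA sH DH pr d (X a) = X (a * d)"
  by (rule ndH) (simp add: pr_actA PX eA_mult algebra_simps)

lemma actA_add: "actA sH DH pr d (x + y) = actA sH DH pr d x + actA sH DH pr d y"
  by (rule ndH) (simp add: pr_actA algebra_simps)
lemma actA_scale: "actA sH DH pr d (sH t x) = sH t (actA sH DH pr d x)"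
  by (rule ndH) (simp add: pr_actA algebra_simps)
lemma actA_zero: "actA sH DH pr d 0 = 0"
  by (rule ndH) (simp add: pr_actA)

lemma actH_add: "actH DH SH k (x + y) = actH DH SH k x + actH DH SH k y"
  by (simp add: actH_S2 S2_add[symmetric] distrib_left distrib_right)
lemma actH_scale: "actH DH SH k (sH t x) = sH t (actH DH SH k x)"
proof -
  have e: "\<And>u v. u * sH t x * SH v = sH t (u * x * SH v)" by (metis sH_mult1 sH_mult2)
  show ?thesis unfolding actH_S2 sH_S2 e ..
qed
lemma actH_zero: "actH DH SH k 0 = 0"
  by (simp add: actH_S2)

lemma eAS: "eA (SA x) = eA x"
proof -
  have 1: "S2 (DA x) (\<lambda>u v. eA (SA u) * eA v) = eA x"
    using arg_cong[OF antipA1[of x], of eA] by (simp add: eA_S2 eA_mult)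
  have "eA (SA x) = eA (SA (S2 (DA x) (\<lambda>u v. sA (eA v) u)))" by (simp add: counitA2)
  also have "\<dots> = S2 (DA x) (\<lambda>u v. eA (SA u) * eA v)" by (simp add: SA_S2 eA_S2 mult.commute)
  finally show ?thesis using 1 by simp
qed

lemma CC: "S2 (DA w) (\<lambda>w1 w2. sA (phi w1) w2) = S2 (DA w) (\<lambda>w1 w2. sA (phi w2) w1)"
proof (rule ndA)
  fix h
  have "pr h (S2 (DA w) (\<lambda>w1 w2. sA (phi w1) w2)) = pr (c * h) w" by (simp add: prR_S2 P1 phi_def)
  also have "\<dots> = pr (h * c) w" using central by simp
  also have "\<dots> = pr h (S2 (DA w) (\<lambda>w1 w2. sA (phi w2) w1))" by (simp add: prR_S2 P1 phi_def mult.commute)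
  finally show "pr h (S2 (DA w) (\<lambda>w1 w2. sA (phi w1) w2)) = pr h (S2 (DA w) (\<lambda>w1 w2. sA (phi w2) w1))" .
qed

lemma CCg: assumes g: "Vector_Spaces.linear sA (*) g"
  shows "S2 (DA w) (\<lambda>w1 w2. phi w1 * g w2) = S2 (DA w) (\<lambda>w1 w2. g w1 * phi w2)"
proof -
  have "g (S2 (DA w) (\<lambda>w1 w2. sA (phi w1) w2)) = g (S2 (DA w) (\<lambda>w1 w2. sA (phi w2) w1))" using CC by simp
  then show ?thesis by (simp add: linS2[OF g] lin_scale[OF g] mult.commute)
qed

end



context HP begin

lemma linphi: "Vector_Spaces.linear sA (*) phi"
proof -
  have "phi = pr c" by (rule ext) (simp add: phi_def)
  then show ?thesis using linpA by simp
qed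

lemma lin_sand: "Vector_Spaces.linear sA (*) (\<lambda>z. pr k (Z * z * W))"
proof (rule linI[OF vsA])
  show "\<And>x y. pr k (Z * (x + y) * W) = pr k (Z * x * W) + pr k (Z * y * W)"
    by (simp add: distrib_left distrib_right)
  show "\<And>t x. pr k (Z * sA t x * W) = t * pr k (Z * x * W)"
    by (metis sA_mult1 sA_mult2 prR_scale)
qed

lemma lin_prS: "Vector_Spaces.linear sA (*) (\<lambda>z. pr k (SA z))"
  by (rule linI[OF vsA]) simp_all

lemma COA_A: assumes f: "Vector_Spaces.linear sA (*) f"
  shows "S3 (cop2 DA x) (\<lambda>u v w. f u * pr k (Z * v * SA w)) = S3 (cop2' DA x) (\<lambda>u v w. f u * pr k (Z * v * SA w))"
proof -
  have l1: "\<And>k1. Vector_Spaces.linear sA (*) (\<lambda>v. pr k1 (Z * v * 1))" by (rule lin_sand)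
  have e: "\<And>u v w. f u * pr k (Z * v * SA w) = S2 (DH k) (\<lambda>k1 k2. f u * pr k1 (Z * v * 1) * pr k2 (SA w))"
    subgoal for u v w using P2[of k "Z * v * 1" "SA w"] by (simp add: S2_mult_left mult.assoc) done
  show ?thesis unfolding e S3_S2_swap using teq3A[OF f l1 lin_prS] by simp
qed

lemma COA_B: assumes f: "Vector_Spaces.linear sA (*) f"
  shows "S3 (cop2 DA x) (\<lambda>u v w. pr k (SA u * v * Z) * f w) = S3 (cop2' DA x) (\<lambda>u v w. pr k (SA u * v * Z) * f w)"
proof -
  have l1: "\<And>k1. Vector_Spaces.linear sA (*) (\<lambda>v. pr k1 (1 * v * Z))" by (rule lin_sand)
  have e: "\<And>u v w. pr k (SA u * v * Z) * f w = S2 (DH k) (\<lambda>k1 k2. pr k1 (SA u) * pr k2 (1 * v * Z) * f w)"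
    subgoal for u v w using P2[of k "SA u" "1 * v * Z"] by (simp add: S2_mult_right mult.assoc) done
  show ?thesis unfolding e S3_S2_swap using teq3A[OF lin_prS l1 f] by simp
qed

lemma ST1: "pr k Xa * phi (Y * e) = S3 (cop2 DA e) (\<lambda>e1 e2 e3. phi (Y * e1) * pr k (Xa * e2 * SA e3))"
proof -
  have inner: "\<And>e1 r. S2 (DA r) (\<lambda>e2 e3. phi (Y * e1) * pr k (Xa * e2 * SA e3)) = phi (Y * e1) * (eA r * pr k Xa)"
  proof -
    fix e1 r
    have "S2 (DA r) (\<lambda>e2 e3. phi (Y * e1) * pr k (Xa * e2 * SA e3)) = phi (Y * e1) * pr k (Xa * S2 (DA r) (\<lambda>e2 e3. e2 * SA e3))"
      by (simp add: S2_mult_left prR_S2 mult.assoc)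
    also have "\<dots> = phi (Y * e1) * (eA r * pr k Xa)"
      by (simp add: antipA2 sA_mult2[symmetric])
    finally show "S2 (DA r) (\<lambda>e2 e3. phi (Y * e1) * pr k (Xa * e2 * SA e3)) = phi (Y * e1) * (eA r * pr k Xa)" .
  qed
  have "pr k Xa * phi (Y * e) = pr k Xa * phi (Y * S2 (DA e) (\<lambda>e1 r. sA (eA r) e1))" by (simp add: counitA2)
  also have "\<dots> = S2 (DA e) (\<lambda>e1 r. phi (Y * e1) * (eA r * pr k Xa))"
    by (simp add: S2_mult_left phi_S2 sA_mult2[symmetric] mult_ac)
  also have "\<dots> = S3 (cop2 DA e) (\<lambda>e1 e2 e3. phi (Y * e1) * pr k (Xa * e2 * SA e3))"
    by (simp add: S3_cop2 inner)
  finally show ?thesis .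
qed

lemma ST46: "S2 (DA q) (\<lambda>b2 b3. S2 (DA p) (\<lambda>e1 e2. phi (b2 * e1) * pr k (Z * b3 * e2 * W)))
   = S2 (DA q) (\<lambda>b2 b3. S2 (DA p) (\<lambda>e1 e2. pr k (Z * b2 * e1 * W) * phi (b3 * e2)))"
proof -
  have m1: "S2 (DA (q * p)) (\<lambda>w1 w2. phi w1 * pr k (Z * w2 * W)) = S2 (DA q) (\<lambda>u v. S2 (DA p) (\<lambda>u' v'. phi (u * u') * pr k (Z * (v * v') * W)))"
    by (rule multA[OF linphi lin_sand])
  have m2: "S2 (DA (q * p)) (\<lambda>w1 w2. pr k (Z * w1 * W) * phi w2) = S2 (DA q) (\<lambda>u v. S2 (DA p) (\<lambda>u' v'. pr k (Z * (u * u') * W) * phi (v * v')))"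
    by (rule multA[OF lin_sand linphi])
  have cc: "S2 (DA (q * p)) (\<lambda>w1 w2. phi w1 * pr k (Z * w2 * W)) = S2 (DA (q * p)) (\<lambda>w1 w2. pr k (Z * w1 * W) * phi w2)"
    by (rule CCg[OF lin_sand])
  show ?thesis using m1 m2 cc by (simp add: mult.assoc)
qed

lemma ST8: "S3 (cop2' DA b) (\<lambda>b1 b2 b3. pr k (SA b1 * b2 * Z) * phi (b3 * e2)) = pr k Z * phi (b * e2)"
proof -
  have inner: "\<And>p b3. S2 (DA p) (\<lambda>b1 b2. pr k (SA b1 * b2 * Z) * phi (b3 * e2)) = eA p * pr k Z * phi (b3 * e2)"
  proof -
    fix p b3
    have "S2 (DA p) (\<lambda>b1 b2. pr k (SA b1 * b2 * Z) * phi (b3 * e2)) = pr k (S2 (DA p) (\<lambda>b1 b2. SA b1 * b2) * Z) * phi (b3 * e2)"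
      by (simp add: S2_mult_right prR_S2)
    also have "\<dots> = eA p * pr k Z * phi (b3 * e2)"
      by (simp add: antipA1 sA_mult1[symmetric])
    finally show "S2 (DA p) (\<lambda>b1 b2. pr k (SA b1 * b2 * Z) * phi (b3 * e2)) = eA p * pr k Z * phi (b3 * e2)" .
  qed
  have "S3 (cop2' DA b) (\<lambda>b1 b2 b3. pr k (SA b1 * b2 * Z) * phi (b3 * e2)) = S2 (DA b) (\<lambda>p b3. eA p * pr k Z * phi (b3 * e2))"
    by (simp add: S3_cop2' inner)
  also have "\<dots> = pr k Z * phi (S2 (DA b) (\<lambda>p b3. sA (eA p) b3) * e2)"
    by (simp add: S2_mult_left S2_mult_right phi_S2 sA_mult1[symmetric] mult_ac)
  also have "\<dots> = pr k Z * phi (b * e2)" by (simp add: counitA1)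
  finally show ?thesis .
qed

end



context HP begin

lemma CORE: "S3 (cop2' DA e) (\<lambda>e1 e2 e3. pr k (e1 * SA e3) * phi (b * e2))
   = S3 (cop2 DA b) (\<lambda>b1 b2 b3. pr k (SA b1 * b3) * phi (b2 * e))"
proof -
  have s1: "S3 (cop2 DA b) (\<lambda>b1 b2 b3. pr k (SA b1 * b3) * phi (b2 * e))
     = S3 (cop2 DA b) (\<lambda>b1 b2 b3. S3 (cop2 DA e) (\<lambda>e1 e2 e3. phi (b2 * e1) * pr k (SA b1 * b3 * e2 * SA e3)))"
    by (rule S3_cong) (rule ST1)
  have s2: "\<dots> = S3 (cop2 DA b) (\<lambda>b1 b2 b3. S3 (cop2' DA e) (\<lambda>e1 e2 e3. phi (b2 * e1) * pr k (SA b1 * b3 * e2 * SA e3)))"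
  proof (rule S3_cong)
    fix b1 b2 b3
    have l: "Vector_Spaces.linear sA (*) (\<lambda>u. phi (b2 * u))"
      using lin_sand[of c b2 1] by (simp add: phi_def[abs_def])
    show "S3 (cop2 DA e) (\<lambda>e1 e2 e3. phi (b2 * e1) * pr k (SA b1 * b3 * e2 * SA e3)) =
         S3 (cop2' DA e) (\<lambda>e1 e2 e3. phi (b2 * e1) * pr k (SA b1 * b3 * e2 * SA e3))"
      by (rule COA_A[OF l])
  qed
  have s3: "\<dots> = S2 (DA b) (\<lambda>b1 q. S2 (DA e) (\<lambda>p e3. S2 (DA q) (\<lambda>b2 b3. S2 (DA p) (\<lambda>e1 e2. phi (b2 * e1) * pr k (SA b1 * b3 * e2 * SA e3)))))"
    unfolding S3_cop2 S3_cop2' by (rule S2_cong, rule S2_swap)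
  have s4: "\<dots> = S2 (DA b) (\<lambda>b1 q. S2 (DA e) (\<lambda>p e3. S2 (DA q) (\<lambda>b2 b3. S2 (DA p) (\<lambda>e1 e2. pr k (SA b1 * b2 * e1 * SA e3) * phi (b3 * e2)))))"
    by (simp only: ST46)
  have s5: "\<dots> = S2 (DA e) (\<lambda>p e3. S2 (DA p) (\<lambda>e1 e2. S2 (DA b) (\<lambda>b1 q. S2 (DA q) (\<lambda>b2 b3. pr k (SA b1 * b2 * (e1 * SA e3)) * phi (b3 * e2)))))"
  proof -
    have a: "\<And>b1 q. S2 (DA e) (\<lambda>p e3. S2 (DA q) (\<lambda>b2 b3. S2 (DA p) (\<lambda>e1 e2. pr k (SA b1 * b2 * e1 * SA e3) * phi (b3 * e2))))
       = S2 (DA e) (\<lambda>p e3. S2 (DA p) (\<lambda>e1 e2. S2 (DA q) (\<lambda>b2 b3. pr k (SA b1 * b2 * (e1 * SA e3)) * phi (b3 * e2))))"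
      by (rule S2_cong, subst S2_swap, simp add: mult.assoc)
    have "S2 (DA b) (\<lambda>b1 q. S2 (DA e) (\<lambda>p e3. S2 (DA q) (\<lambda>b2 b3. S2 (DA p) (\<lambda>e1 e2. pr k (SA b1 * b2 * e1 * SA e3) * phi (b3 * e2)))))
      = S2 (DA b) (\<lambda>b1 q. S2 (DA e) (\<lambda>p e3. S2 (DA p) (\<lambda>e1 e2. S2 (DA q) (\<lambda>b2 b3. pr k (SA b1 * b2 * (e1 * SA e3)) * phi (b3 * e2)))))"
      by (simp only: a)
    also have "\<dots> = S2 (DA e) (\<lambda>p e3. S2 (DA b) (\<lambda>b1 q. S2 (DA p) (\<lambda>e1 e2. S2 (DA q) (\<lambda>b2 b3. pr k (SA b1 * b2 * (e1 * SA e3)) * phi (b3 * e2)))))"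
      by (rule S2_swap)
    also have "\<dots> = S2 (DA e) (\<lambda>p e3. S2 (DA p) (\<lambda>e1 e2. S2 (DA b) (\<lambda>b1 q. S2 (DA q) (\<lambda>b2 b3. pr k (SA b1 * b2 * (e1 * SA e3)) * phi (b3 * e2)))))"
      by (rule S2_cong, rule S2_swap)
    finally show ?thesis .
  qed
  have s6: "\<dots> = S3 (cop2' DA e) (\<lambda>e1 e2 e3. S3 (cop2 DA b) (\<lambda>b1 b2 b3. pr k (SA b1 * b2 * (e1 * SA e3)) * phi (b3 * e2)))"
    unfolding S3_cop2 S3_cop2' ..
  have s7: "\<dots> = S3 (cop2' DA e) (\<lambda>e1 e2 e3. S3 (cop2' DA b) (\<lambda>b1 b2 b3. pr k (SA b1 * b2 * (e1 * SA e3)) * phi (b3 * e2)))"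
  proof (rule S3_cong)
    fix e1 e2 e3
    have l: "Vector_Spaces.linear sA (*) (\<lambda>u. phi (u * e2))"
      using lin_sand[of c 1 e2] by (simp add: phi_def[abs_def])
    show "S3 (cop2 DA b) (\<lambda>b1 b2 b3. pr k (SA b1 * b2 * (e1 * SA e3)) * phi (b3 * e2)) =
          S3 (cop2' DA b) (\<lambda>b1 b2 b3. pr k (SA b1 * b2 * (e1 * SA e3)) * phi (b3 * e2))"
      by (rule COA_B[OF l])
  qed
  have s8: "\<dots> = S3 (cop2' DA e) (\<lambda>e1 e2 e3. pr k (e1 * SA e3) * phi (b * e2))"
    by (rule S3_cong) (rule ST8)
  show ?thesis using s1 s2 s3 s4 s5 s6 s7 s8 by simp
qed

end



context HP begin

definition bp where "bp k b = S3 (cop2 DA b) (\<lambda>b1 b2 b3. sA (pr k (SA b1 * b3)) b2)"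

lemma phi_S3: "phi (S3 L F) = S3 L (\<lambda>u v w. phi (F u v w))" by (rule S3_hom) simp_all
lemma eA_S3: "eA (S3 L F) = S3 L (\<lambda>u v w. eA (F u v w))" by (rule S3_hom) simp_all

lemma PHIBP: "phi (bp k b) = eH k * phi b"
proof -
  have 1: "\<And>b1 b2 b3. pr k (SA b1 * b3) * phi b2 = S2 (DH k) (\<lambda>k1 k2. pr (SH k1) b1 * pr c b2 * pr k2 b3)"
    by (simp add: P2 pr_S S2_mult_right S2_mult_left phi_def mult_ac)
  have 2: "\<And>k1 k2. SH k1 * (c * k2) = c * (SH k1 * k2)" using central by (metis mult.assoc)
  have "phi (bp k b) = S3 (cop2 DA b) (\<lambda>b1 b2 b3. pr k (SA b1 * b3) * phi b2)"
    by (simp add: bp_def phi_S3)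
  also have "\<dots> = S2 (DH k) (\<lambda>k1 k2. S3 (cop2 DA b) (\<lambda>b1 b2 b3. pr (SH k1) b1 * pr c b2 * pr k2 b3))"
    unfolding 1 by (rule S3_S2_swap)
  also have "\<dots> = S2 (DH k) (\<lambda>k1 k2. pr (c * (SH k1 * k2)) b)"
    by (simp add: P1_cop2 2)
  also have "\<dots> = pr (c * S2 (DH k) (\<lambda>k1 k2. SH k1 * k2)) b"
    by (simp add: prL_S2 S2_mult_left)
  also have "\<dots> = eH k * phi b"
    by (simp add: antipH1 sH_mult2[symmetric] phi_def)
  finally show ?thesis .
qed

lemma LHSGEN: "pr (actH DH SH k (X b)) e = S3 (cop2' DA e) (\<lambda>e1 e2 e3. pr k (e1 * SA e3) * phi (b * e2)) - phi b * (eA e * eH k)"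
proof -
  have aux: "S3 (cop2' DA e) (\<lambda>e1 e2 e3. pr k (e1 * SA e3) * eA e2) = eA e * eH k"
  proof -
    have inner: "\<And>p e3. S2 (DA p) (\<lambda>e1 e2. pr k (e1 * SA e3) * eA e2) = pr k (p * SA e3)"
    proof -
      fix p e3
      have "S2 (DA p) (\<lambda>e1 e2. pr k (e1 * SA e3) * eA e2) = pr k (S2 (DA p) (\<lambda>e1 e2. sA (eA e2) e1) * SA e3)"
        by (simp add: prR_S2 S2_mult_right sA_mult1[symmetric] mult.commute)
      then show "S2 (DA p) (\<lambda>e1 e2. pr k (e1 * SA e3) * eA e2) = pr k (p * SA e3)" by (simp add: counitA2)
    qed
    have "S3 (cop2' DA e) (\<lambda>e1 e2 e3. pr k (e1 * SA e3) * eA e2) = pr k (S2 (DA e) (\<lambda>p e3. p * SA e3))"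
      by (simp add: S3_cop2' inner prR_S2)
    then show ?thesis by (simp add: antipA2)
  qed
  have "pr (actH DH SH k (X b)) e = S2 (DH k) (\<lambda>k1 k2. S3 (cop2' DA e) (\<lambda>e1 e2 e3. pr k1 e1 * pr (X b) e2 * pr (SH k2) e3))"
    by (simp add: actH_S2 prL_S2 P1_cop2')
  also have "\<dots> = S3 (cop2' DA e) (\<lambda>e1 e2 e3. S2 (DH k) (\<lambda>k1 k2. pr k1 e1 * pr k2 (SA e3)) * (phi (b * e2) - phi b * eA e2))"
    by (simp add: S3_S2_swap[symmetric] S2_mult_right pr_S PX mult_ac)
  also have "\<dots> = S3 (cop2' DA e) (\<lambda>e1 e2 e3. pr k (e1 * SA e3) * phi (b * e2) - phi b * (pr k (e1 * SA e3) * eA e2))"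
    by (simp add: P2 algebra_simps)
  also have "\<dots> = S3 (cop2' DA e) (\<lambda>e1 e2 e3. pr k (e1 * SA e3) * phi (b * e2)) - phi b * (eA e * eH k)"
    by (simp add: S3_diff S3_mult_left[symmetric] aux)
  finally show ?thesis .
qed

lemma GEN: "actH DH SH k (X b) = X (bp k b)"
proof (rule ndH)
  fix e
  have "phi (bp k b * e) = S3 (cop2 DA b) (\<lambda>b1 b2 b3. pr k (SA b1 * b3) * phi (b2 * e))"
    by (simp add: bp_def S3_mult_right phi_S3 sA_mult1[symmetric])
  moreover have "pr (actH DH SH k (X b)) e = S3 (cop2 DA b) (\<lambda>b1 b2 b3. pr k (SA b1 * b3) * phi (b2 * e)) - phi b * (eA e * eH k)"
    by (simp add: LHSGEN CORE)
  ultimately show "pr (actH DH SH k (X b)) e = pr (X (bp k b)) e"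
    by (simp add: PX PHIBP mult_ac)
qed

lemma GEN': "actH DH SH k (X b) = S3 (cop2 DA b) (\<lambda>b1 b2 b3. sH (pr k (SA b1 * b3)) (X b2))"
  by (simp add: GEN bp_def X_S3 X_scale)

lemma EPSBP: "eA (bp k b) = eH k * eA b"
proof -
  have inner: "\<And>b1 q. S2 (DA q) (\<lambda>b2 b3. pr k (SA b1 * b3) * eA b2) = pr k (SA b1 * q)"
  proof -
    fix b1 q
    have "S2 (DA q) (\<lambda>b2 b3. pr k (SA b1 * b3) * eA b2) = pr k (SA b1 * S2 (DA q) (\<lambda>b2 b3. sA (eA b2) b3))"
      by (simp add: prR_S2 S2_mult_left sA_mult2[symmetric] mult.commute)
    then show "S2 (DA q) (\<lambda>b2 b3. pr k (SA b1 * b3) * eA b2) = pr k (SA b1 * q)" by (simp add: counitA1)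
  qed
  have "eA (bp k b) = S2 (DA b) (\<lambda>b1 q. pr k (SA b1 * q))"
    by (simp add: bp_def eA_S3, simp add: S3_cop2 inner)
  also have "\<dots> = pr k (S2 (DA b) (\<lambda>b1 q. SA b1 * q))" by (simp add: prR_S2)
  also have "\<dots> = eH k * eA b" by (simp add: antipA1)
  finally show ?thesis .
qed

lemma EB: "S3 (cop2 DA b) (\<lambda>b1 b2 b3. sA (eA (SA b1 * b3)) b2) = b"
proof -
  have inner: "\<And>b1 q. S2 (DA q) (\<lambda>b2 b3. sA (eA (SA b1 * b3)) b2) = sA (eA b1) q"
  proof -
    fix b1 q
    have "S2 (DA q) (\<lambda>b2 b3. sA (eA (SA b1 * b3)) b2) = sA (eA b1) (S2 (DA q) (\<lambda>b2 b3. sA (eA b3) b2))"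
      by (simp add: sA_S2 eA_mult eAS)
    then show "S2 (DA q) (\<lambda>b2 b3. sA (eA (SA b1 * b3)) b2) = sA (eA b1) q" by (simp add: counitA2)
  qed
  show ?thesis by (simp add: S3_cop2 inner counitA1)
qed

end



context HP begin

lemma sH_S3: "sH t (S3 L F) = S3 L (\<lambda>u v w. sH t (F u v w))"
  by (rule S3_hom) (simp_all add: vH.scale_right_distrib)

lemma gH_zero: "Vector_Spaces.linear sH (*) g \<Longrightarrow> g 0 = 0"
  using lin_scale[of sH g 0 0] by simp
lemma gH_neg: "Vector_Spaces.linear sH (*) g \<Longrightarrow> g (- x) = - g x"
  using lin_scale[of sH g "-1" x] by simp
lemma gH_diff: "Vector_Spaces.linear sH (*) g \<Longrightarrow> g (x - y) = g x - g y"
  using lin_add[of sH g x "-y"] gH_neg[of g y] by simp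
lemma gH_S2: "Vector_Spaces.linear sH (*) g \<Longrightarrow> g (S2 L F) = S2 L (\<lambda>u v. g (F u v))"
  by (rule S2_hom) (simp_all add: lin_add gH_zero)
lemma gH_S3: "Vector_Spaces.linear sH (*) g \<Longrightarrow> g (S3 L F) = S3 L (\<lambda>u v w. g (F u v w))"
  by (rule S3_hom) (simp_all add: lin_add gH_zero)

lemma gX: "Vector_Spaces.linear sH (*) g \<Longrightarrow> g (actA sH DH pr y x) = S2 (DH x) (\<lambda>x1 x2. pr x1 y * g x2) - pr x y * g 1"
  by (simp add: actA_S2 gH_diff gH_S2 lin_scale)

lemma span_stable:
  assumes x: "x \<in> vH.span S" and a: "\<And>x y. T (x + y) = T x + T y" and s: "\<And>t x. T (sH t x) = sH t (T x)"
    and b: "\<And>x. x \<in> S \<Longrightarrow> T x \<in> vH.span S"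
  shows "T x \<in> vH.span S"
  using x
proof (induction rule: vH.span_induct_alt)
  case base
  have "T 0 = 0" using s[of 0 0] by simp
  then show ?case by (simp add: vH.span_zero)
next
  case (step t x y)
  then show ?case by (simp add: a s b vH.span_add vH.span_scale)
qed

lemma claim1: "qd_stable sH DH SH pr (vH.span (range X))"
  unfolding qd_stable_def
proof (intro conjI allI impI)
  fix h x assume "x \<in> vH.span (range X)"
  then show "actH DH SH h x \<in> vH.span (range X)"
    by (rule span_stable[where T="actH DH SH h"]) (auto simp: actH_add actH_scale GEN intro: vH.span_base)
next
  fix a x assume "x \<in> vH.span (range X)"
  then show "actA sH DH pr a x \<in> vH.span (range X)"
    by (rule span_stable[where T="actA sH DH pr a"]) (auto simp: actA_add actA_scale actA_X intro: vH.span_base)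
qed

lemma claim2: "qd_stable sH DH SH pr (vH.span {X a | a. eA a = 0})"
  unfolding qd_stable_def
proof (intro conjI allI impI)
  fix h x assume "x \<in> vH.span {X a | a. eA a = 0}"
  then show "actH DH SH h x \<in> vH.span {X a | a. eA a = 0}"
  proof (rule span_stable[where T="actH DH SH h"])
    fix y assume "y \<in> {X a | a. eA a = 0}"
    then obtain a where "y = X a" "eA a = 0" by auto
    then have "actH DH SH h y \<in> {X a | a. eA a = 0}" by (auto simp: GEN EPSBP)
    then show "actH DH SH h y \<in> vH.span {X a | a. eA a = 0}" by (rule vH.span_base)
  qed (simp_all add: actH_add actH_scale)
next
  fix d x assume "x \<in> vH.span {X a | a. eA a = 0}"
  then show "actA sH DH pr d x \<in> vH.span {X a | a. eA a = 0}"
  proof (rule span_stable[where T="actA sH DH pr d"])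
    fix y assume "y \<in> {X a | a. eA a = 0}"
    then obtain a where "y = X a" "eA a = 0" by auto
    then have "actA sH DH pr d y \<in> {X a | a. eA a = 0}" by (auto simp: actA_X eA_mult)
    then show "actA sH DH pr d y \<in> vH.span {X a | a. eA a = 0}" by (rule vH.span_base)
  qed (simp_all add: actA_add actA_scale)
qed

lemma claim3: "dpart sA DA pr (X a) b = sum_list (map (\<lambda>(b1, b2). sA (pr c (a * b1)) b2) (DA b)) - sA (pr c a) b"
proof -
  have "dpart sA DA pr (X a) b = S2 (DA b) (\<lambda>b1 b2. sA (pr (X a) b1) b2)" by (simp add: dpart_def S2_def)
  also have "\<dots> = S2 (DA b) (\<lambda>b1 b2. sA (phi (a * b1)) b2) - sA (phi a) (S2 (DA b) (\<lambda>b1 b2. sA (eA b1) b2))"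
    by (simp add: PX vA.scale_left_diff_distrib S2_diff sA_S2)
  also have "\<dots> = sum_list (map (\<lambda>(b1, b2). sA (pr c (a * b1)) b2) (DA b)) - sA (pr c a) b"
    by (simp add: counitA1, simp add: S2_def phi_def)
  finally show ?thesis .
qed

lemma claim4: "teq sH sA (psi_inv sH DH DA pr b (X a)) (map (\<lambda>(b1, b2). (X (a * b1), b2)) (DA b))"
proof -
  have "psi_inv sH DH DA pr b (X a) = map (\<lambda>(b1, b2). (X (a * b1), b2)) (DA b)"
    by (simp add: psi_inv_def actA_X)
  then show ?thesis by (simp add: teq_def)
qed

lemma claim5: "actH DH SH (X a) (X b) =
   sum_list (map (\<lambda>(b1, b2, b3). sH (pr c (a * SA b1 * b3)) (X b2)) (cop2 DA b)) - sH (pr c a) (X b)"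
proof -
  have e1: "S3 (cop2 DA b) (\<lambda>b1 b2 b3. sH (eA (SA b1 * b3)) (X b2)) = X b"
    using arg_cong[OF EB, of X] by (simp add: X_S3 X_scale)
  have "actH DH SH (X a) (X b) = S3 (cop2 DA b) (\<lambda>b1 b2 b3. sH (phi (a * SA b1 * b3)) (X b2) - sH (phi a) (sH (eA (SA b1 * b3)) (X b2)))"
    by (simp add: GEN' PX vH.scale_left_diff_distrib mult.assoc)
  also have "\<dots> = S3 (cop2 DA b) (\<lambda>b1 b2 b3. sH (phi (a * SA b1 * b3)) (X b2)) - sH (phi a) (S3 (cop2 DA b) (\<lambda>b1 b2 b3. sH (eA (SA b1 * b3)) (X b2)))"
    by (simp only: S3_diff sH_S3)
  also have "\<dots> = S3 (cop2 DA b) (\<lambda>b1 b2 b3. sH (phi (a * SA b1 * b3)) (X b2)) - sH (phi a) (X b)"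
    by (simp only: e1)
  finally show ?thesis by (simp add: S3_def phi_def)
qed

lemma sum_map_pair2: "sum_list (map (\<lambda>(x, y). F x y) (map (\<lambda>(u, v). (G u v, K u v)) L)) = S2 L (\<lambda>u v. F (G u v) (K u v))"
  by (induction L) auto
lemma sum_map_pair3: "sum_list (map (\<lambda>(x, y). F x y) (map (\<lambda>(u, v, w). (G u v w, K u v w)) L)) = S3 L (\<lambda>u v w. F (G u v w) (K u v w))"
  by (induction L) auto

lemma claim6: "teq sH sH (psi DH SH (X a) (X b)) (map (\<lambda>(b1, b2, b3). (X b2, X (a * SA b1 * b3))) (cop2 DA b))"
  unfolding teq_def
proof (intro allI impI)
  fix f g assume f: "Vector_Spaces.linear sH (*) f" and g: "Vector_Spaces.linear sH (*) g"
  have L: "sum_list (map (\<lambda>(x, y). f x * g y) (psi DH SH (X a) (X b))) =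
     S2 (DH (X a)) (\<lambda>x1 x2. f (actH DH SH x1 (X b)) * g x2) + f (- actH DH SH (X a) (X b)) * g 1"
    unfolding psi_def map_append sum_list_append sum_map_pair2 by simp
  have R: "sum_list (map (\<lambda>(x, y). f x * g y) (map (\<lambda>(b1, b2, b3). (X b2, X (a * SA b1 * b3))) (cop2 DA b)))
     = S3 (cop2 DA b) (\<lambda>b1 b2 b3. f (X b2) * g (X (a * (SA b1 * b3))))"
    unfolding sum_map_pair3 by (simp add: mult.assoc)
  have "S2 (DH (X a)) (\<lambda>x1 x2. f (actH DH SH x1 (X b)) * g x2) + f (- actH DH SH (X a) (X b)) * g 1
     = S2 (DH (X a)) (\<lambda>x1 x2. S3 (cop2 DA b) (\<lambda>b1 b2 b3. f (X b2) * (pr x1 (SA b1 * b3) * g x2)))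
       - S3 (cop2 DA b) (\<lambda>b1 b2 b3. f (X b2) * (pr (X a) (SA b1 * b3) * g 1))"
    by (simp add: GEN' gH_S3[OF f] gH_neg[OF f] lin_scale[OF f] S3_mult_right S3_mult_left mult_ac)
  also have "\<dots> = S3 (cop2 DA b) (\<lambda>b1 b2 b3. f (X b2) * (S2 (DH (X a)) (\<lambda>x1 x2. pr x1 (SA b1 * b3) * g x2) - pr (X a) (SA b1 * b3) * g 1))"
    by (simp add: S3_S2_swap[symmetric] S2_mult_left right_diff_distrib S3_diff)
  also have "\<dots> = S3 (cop2 DA b) (\<lambda>b1 b2 b3. f (X b2) * g (X (a * (SA b1 * b3))))"
    by (simp add: gX[OF g, symmetric] actA_X)
  finally show "sum_list (map (\<lambda>(x, y). f x * g y) (psi DH SH (X a) (X b))) =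
    sum_list (map (\<lambda>(x, y). f x * g y) (map (\<lambda>(b1, b2, b3). (X b2, X (a * SA b1 * b3))) (cop2 DA b)))"
    using L R by simp
qed

end

theorem proposition2p6:
  fixes sH :: "complex \<Rightarrow> 'h::ring_1 \<Rightarrow> 'h" and \<Delta>H :: "'h \<Rightarrow> ('h \<times> 'h) list"
    and \<epsilon>H :: "'h \<Rightarrow> complex" and SH :: "'h \<Rightarrow> 'h"
    and sA :: "complex \<Rightarrow> 'a::ring_1 \<Rightarrow> 'a" and \<Delta>A :: "'a \<Rightarrow> ('a \<times> 'a) list"
    and \<epsilon>A :: "'a \<Rightarrow> complex" and SA :: "'a \<Rightarrow> 'a"
    and pr :: "'h \<Rightarrow> 'a \<Rightarrow> complex" and c :: 'h
  assumes hp: "hopf_pairing sH \<Delta>H \<epsilon>H SH sA \<Delta>A \<epsilon>A SA pr"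
    and central: "\<forall>h. c * h = h * c"
    and nontriv: "c \<notin> Modules.module.span sH {1}"
  shows "(qd_stable sH \<Delta>H SH pr (Modules.module.span sH (range (xel sH \<Delta>H pr c))))
     \<and> (qd_stable sH \<Delta>H SH pr (Modules.module.span sH {xel sH \<Delta>H pr c a | a. \<epsilon>A a = 0}))
     \<and> (\<forall>a b. dpart sA \<Delta>A pr (xel sH \<Delta>H pr c a) b =
           sum_list (map (\<lambda>(b1, b2). sA (pr c (a * b1)) b2) (\<Delta>A b)) - sA (pr c a) b)
     \<and> (\<forall>a b. teq sH sA (psi_inv sH \<Delta>H \<Delta>A pr b (xel sH \<Delta>H pr c a))
           (map (\<lambda>(b1, b2). (xel sH \<Delta>H pr c (a * b1), b2)) (\<Delta>A b)))
     \<and> (\<forall>a b. actH \<Delta>H SH (xel sH \<Delta>H pr c a) (xel sH \<Delta>H pr c b) =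
           sum_list (map (\<lambda>(b1, b2, b3). sH (pr c (a * SA b1 * b3)) (xel sH \<Delta>H pr c b2))
             (cop2 \<Delta>A b))
           - sH (pr c a) (xel sH \<Delta>H pr c b))
     \<and> (\<forall>a b. teq sH sH (psi \<Delta>H SH (xel sH \<Delta>H pr c a) (xel sH \<Delta>H pr c b))
           (map (\<lambda>(b1, b2, b3). (xel sH \<Delta>H pr c b2, xel sH \<Delta>H pr c (a * SA b1 * b3)))
             (cop2 \<Delta>A b)))"
  proof -
  interpret HP sH \<Delta>H \<epsilon>H SH sA \<Delta>A \<epsilon>A SA pr c by (rule HP.intro[OF hp central])
  show ?thesis using claim1 claim2 claim3 claim4 claim5 claim6 by blast
qed

end
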